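(* Let $K_\infty=s_1s_2s_3\dots$ be the fixed point beginning with $1$ of the substitution $1\mapsto10$, $0\mapsto11$, let $t_k=\sum_{i=1}^k s_i\pmod 2$ and $\tau_\infty=\sum_{k\ge1}t_k2^{-k}$. Then the digits $0$ and $1$ each occur in the sequence $t_1t_2t_3\dots$ with asymptotic frequency $1/2$, but $\tau_\infty$ is not a normal number in base $2$ (i.e. it is not true that every binary word of length $n$ occurs in $t_1t_2\dots$ with asymptotic frequency $2^{-n}$ for all $n$). *)

theory Defs
  imports Complex_Main
begin

definition subst_letter :: "nat \<Rightarrow> nat list" where
  "subst_letter a = (if a = 1 then [1, 0] else [1, 1])"

definition subst :: "nat list \<Rightarrow> nat list" where
  "subst w = concat (map subst_letter w)"

text \<open>K_infinity = s_1 s_2 s_3 ...: the fixed point starting with 1, i.e. the limit of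
  subst^n [1]; subst^k [1] has length 2^k \<ge> k, so s_k is its (k-1)-th entry (1-based indexing).\<close>
definition s_seq :: "nat \<Rightarrow> nat" where
  "s_seq k = ((subst ^^ k) [1]) ! (k - 1)"

definition t_seq :: "nat \<Rightarrow> nat" where
  "t_seq k = (\<Sum>i=1..k. s_seq i) mod 2"

definition occ_count :: "(nat \<Rightarrow> nat) \<Rightarrow> nat list \<Rightarrow> nat \<Rightarrow> nat" where
  "occ_count x w N = card {k \<in> {1..N}. \<forall>i<length w. x (k + i) = w ! i}"

definition has_freq :: "(nat \<Rightarrow> nat) \<Rightarrow> nat list \<Rightarrow> real \<Rightarrow> bool" where
  "has_freq x w c \<longleftrightarrow> (\<lambda>N. real (occ_count x w N) / real N) \<longlonglongrightarrow> c"

definition binary_normal_seq :: "(nat \<Rightarrow> nat) \<Rightarrow> bool" where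
  "binary_normal_seq x \<longleftrightarrow>
     (\<forall>n\<ge>1. \<forall>w. length w = n \<and> set w \<subseteq> {0, 1} \<longrightarrow> has_freq x w (1 / 2 ^ n))"

end

theory Submission
  imports Defs "HOL-Analysis.Analysis"
begin

lemma subst_Cons: "subst (a # w) = subst_letter a @ subst w"
  by (simp add: subst_def)

lemma len_subst_letter: "length (subst_letter a) = 2"
  by (simp add: subst_letter_def)

lemma len_subst: "length (subst w) = 2 * length w"
  by (induction w) (auto simp: subst_def len_subst_letter)

lemma subst_even: "j < length w \<Longrightarrow> subst w ! (2 * j) = 1"
proof (induction w arbitrary: j)
  case Nil then show ?case by simp
next
  case (Cons a w)
  show ?case
  proof (cases j)
    case 0 then show ?thesis by (simp add: subst_Cons subst_letter_def)
  next
    case (Suc j')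
    then have "subst (a # w) ! (2 * j) = subst w ! (2 * j')"
      by (simp add: subst_Cons nth_append len_subst_letter)
    then show ?thesis using Cons Suc by simp
  qed
qed

lemma len_iter: "length ((subst ^^ n) [1]) = 2 ^ n"
  by (induction n) (auto simp: len_subst)

lemma s_odd: "s_seq (2 * m + 1) = 1"
proof -
  have "m < 2 ^ (2 * m)"
  proof -
    have "m < 2 ^ m" by (rule less_exp)
    also have "(2::nat) ^ m \<le> 2 ^ (2 * m)" by (rule power_increasing) auto
    finally show ?thesis .
  qed
  then have "subst ((subst ^^ (2*m)) [1]) ! (2 * m) = 1"
    using len_iter[of "2*m"] by (intro subst_even) simp
  then show ?thesis by (simp add: s_seq_def)
qed

lemma t_odd: "t_seq (2 * m + 1) = (t_seq (2 * m) + 1) mod 2"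
proof -
  have "(\<Sum>i=1..2*m+1. s_seq i) = (\<Sum>i=1..2*m. s_seq i) + s_seq (2*m+1)"
    by (simp add: sum.cl_ivl_Suc)
  then have "(\<Sum>i=1..2*m+1. s_seq i) = (\<Sum>i=1..2*m. s_seq i) + 1" using s_odd[of m] by simp
  then show ?thesis unfolding t_seq_def by presburger
qed

lemma t_01: "t_seq k = 0 \<or> t_seq k = 1"
  unfolding t_seq_def by presburger

definition g :: "nat \<Rightarrow> nat \<Rightarrow> nat" where
  "g a N = card {k \<in> {1..N}. t_seq k = a}"

lemma occ1: "occ_count t_seq [a] N = g a N"
  by (simp add: occ_count_def g_def)

lemma g_Suc: "g a (Suc N) = g a N + (if t_seq (Suc N) = a then 1 else 0)"
proof -
  have "{k \<in> {1..Suc N}. t_seq k = a} = {k \<in> {1..N}. t_seq k = a} \<union>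
        (if t_seq (Suc N) = a then {Suc N} else {})"
    by (auto simp: le_Suc_eq)
  then show ?thesis by (simp add: g_def)
qed

lemma g0: "g a 0 = 0" by (simp add: g_def)

lemma g_odd: "a \<in> {0,1} \<Longrightarrow> g a (2 * M + 1) = g a 1 + M"
proof (induction M)
  case 0 then show ?case by simp
next
  case (Suc M)
  have e: "2 * Suc M + 1 = Suc (Suc (2 * M + 1))" by simp
  have "t_seq (2 * (M+1) + 1) = (t_seq (2 * (M+1)) + 1) mod 2" by (rule t_odd)
  then have "(if t_seq (Suc (2*M+1)) = a then 1 else 0) + (if t_seq (Suc (Suc (2*M+1))) = a then 1 else 0) = (1::nat)"
    using t_01[of "Suc (2*M+1)"] Suc.prems by (auto simp: algebra_simps)
  then show ?case unfolding e g_Suc using Suc by simp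
qed

lemma g1: "g a 1 \<le> 1"
  using g_Suc[of a 0] by (simp add: g0)

lemma g_bound: "a \<in> {0,1} \<Longrightarrow> \<bar>real (g a N) - real N / 2\<bar> \<le> 2"
proof (cases "even N")
  case True
  then obtain M where M: "N = 2 * M" by blast
  have "g a (2*M+1) = g a (2*M) + (if t_seq (Suc (2*M)) = a then 1 else 0)"
    using g_Suc[of a "2*M"] by simp
  moreover assume "a \<in> {0,1}"
  ultimately have "g a 1 + M \<le> g a N + 1" "g a N \<le> g a 1 + M"
    using g_odd[of a M] M by (auto split: if_splits)
  then show ?thesis using g1[of a] M by auto
next
  case False
  then obtain M where M: "N = 2 * M + 1" using oddE by blast
  assume "a \<in> {0,1}"
  then have "real (g a N) = real (g a 1) + real M" using g_odd[of a M] M by simp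
  moreover have "real (g a 1) \<le> 1" using g1[of a] by simp
  ultimately have "real (g a N) - real N / 2 = real (g a 1) - 1/2" "real (g a 1) \<le> 1"
    using M by (auto simp: field_simps)
  then show ?thesis by (simp add: abs_le_iff)
qed

lemma freq: "a \<in> {0,1} \<Longrightarrow> has_freq t_seq [a] (1/2)"
proof -
  assume a: "a \<in> {0,1}"
  have "(\<lambda>N. real (g a N) / real N - 1/2) \<longlonglongrightarrow> 0"
  proof (rule Lim_null_comparison)
    show "\<forall>\<^sub>F N in sequentially. norm (real (g a N) / real N - 1/2) \<le> 2 / real N"
    proof (rule eventually_sequentiallyI[of 1])
      fix N :: nat assume "1 \<le> N"
      then have Np: "real N > 0" by simp
      have "real (g a N) / real N - 1/2 = (real (g a N) - real N / 2) / real N"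
        using Np by (simp add: field_simps)
      then show "norm (real (g a N) / real N - 1/2) \<le> 2 / real N"
        using g_bound[OF a, of N] Np by (simp add: abs_divide divide_right_mono)
    qed
    show "(\<lambda>N. 2 / real N) \<longlonglongrightarrow> 0"
      by (rule lim_const_over_n)
  qed
  then have "(\<lambda>N. real (g a N) / real N) \<longlonglongrightarrow> 1/2"
    by (simp add: LIM_zero_iff)
  then show ?thesis by (simp add: has_freq_def occ1)
qed

lemma no000: "occ_count t_seq [0,0,0] N = 0"
proof -
  have "{k \<in> {1..N}. \<forall>i<length [0,0,0::nat]. t_seq (k + i) = [0,0,0] ! i} = {}"
  proof (rule ccontr)
    assume "\<not> ?thesis"
    then obtain k where k: "\<forall>i<length [0,0,0::nat]. t_seq (k + i) = [0,0,0::nat] ! i" by blast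
    have h0: "t_seq k = 0" using k[rule_format, of 0] by simp
    have h1: "t_seq (k+1) = 0" using k[rule_format, of 1] by simp
    have h2: "t_seq (k+2) = 0" using k[rule_format, of 2] by simp
    show False
    proof (cases "even k")
      case True
      then obtain m where "k = 2 * m" by blast
      then show False using t_odd[of m] h0 h1 by simp
    next
      case False
      then obtain m' where "k = 2 * m' + 1" using oddE by blast
      then obtain m where "k + 1 = 2 * m" by (intro that[of "m' + 1"]) simp
      then have "k + 2 = 2 * m + 1" by simp
      then show False using t_odd[of m] h1 h2 \<open>k + 1 = 2 * m\<close> by simp
    qed
  qed
  then show ?thesis unfolding occ_count_def by simp
qed

theorem mainTheorem10:
  shows "has_freq t_seq [0] (1/2) \<and> has_freq t_seq [1] (1/2) \<and> \<not> binary_normal_seq t_seq"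
proof (intro conjI)
  show "has_freq t_seq [0] (1/2)" by (rule freq) simp
  show "has_freq t_seq [1] (1/2)" by (rule freq) simp
  show "\<not> binary_normal_seq t_seq"
  proof
    assume "binary_normal_seq t_seq"
    then have "has_freq t_seq [0,0,0] (1 / 2 ^ 3)"
    proof -
      have A: "\<forall>n\<ge>1. \<forall>w. length w = n \<and> set w \<subseteq> {0, 1} \<longrightarrow> has_freq t_seq w (1 / 2 ^ n)"
        using \<open>binary_normal_seq t_seq\<close> unfolding binary_normal_seq_def by blast
      have "\<forall>w. length w = 3 \<and> set w \<subseteq> {0, 1} \<longrightarrow> has_freq t_seq w (1 / 2 ^ 3)"
        using mp[OF A[THEN spec[of _ 3]]] by simp
      then show ?thesis by (drule_tac x="[0,0,0]" in spec) simp
    qed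
    then have "(\<lambda>N. 0::real) \<longlonglongrightarrow> 1/8" by (simp add: has_freq_def no000)
    then show False using LIMSEQ_unique[OF tendsto_const] by force
  qed
qed

end
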